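(* Fix $0<B<1$ and $H>0$, let $$x(s)=\frac1H\sqrt{1+B^2+2B\sin\!\big(Hs+\tfrac{3\pi}{2}\big)},\qquad z(s)=\int_{3\pi/(2H)}^{\,s+3\pi/(2H)}\frac{1+B\sin(Ht)}{\sqrt{1+B^2+2B\sin(Ht)}}\,dt ,$$ $\beta(s)=(x(s),0,z(s))$, and let $\Sigma$ be the (complete) unduloid obtained by rotating $\beta$ about the $z$-axis, with unit normal $N=(-z'\cos\theta,-z'\sin\theta,x')$ at $(x(s)\cos\theta,x(s)\sin\theta,z(s))$ and constant mean curvature $H$ with respect to $N$. For $n\in\mathbb N$ let $$t_n=-\frac1H\sin^{-1}(-B)+\frac{(4n-1)\pi}{2H}\quad(\text{so }\sin(Ht_n+\tfrac{3\pi}{2})=-B),$$ and $p_n=\beta(t_n)$. Then there is $n_0\in\mathbb N$ such that for all $n\ge n_0$, $$|\Phi|^2\langle\vec x,N\rangle^2>\tfrac12\big(2+H\langle\vec x,N\rangle\big)^2\quad\text{at }p_n.$$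
   Context: Conventions: $\sin^{-1}:[-1,1]\to[-\pi/2,\pi/2]$; shape operator $A$ w.r.t. $N$ defined by $\langle A(Y),Z\rangle=\langle\bar\nabla_YZ,N\rangle$; mean curvature $H=\operatorname{tr}A$ (unnormalized); $\Phi=\Pi-\frac H2g_\Sigma$, so $|\Phi|^2=|A|^2-H^2/2$; $\vec x$ the position vector. *)

theory Defs
  imports "HOL-Analysis.Analysis"
begin

definition oint :: "real \<Rightarrow> real \<Rightarrow> (real \<Rightarrow> real) \<Rightarrow> real" where
  "oint a b f = (if a \<le> b then integral {a..b} f else - integral {b..a} f)"

definition undx :: "real \<Rightarrow> real \<Rightarrow> real \<Rightarrow> real" where
  "undx B H s = (1 / H) * sqrt (1 + B^2 + 2 * B * sin (H * s + 3 * pi / 2))"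

definition undz :: "real \<Rightarrow> real \<Rightarrow> real \<Rightarrow> real" where
  "undz B H s = oint (3 * pi / (2 * H)) (s + 3 * pi / (2 * H))
      (\<lambda>t. (1 + B * sin (H * t)) / sqrt (1 + B^2 + 2 * B * sin (H * t)))"

definition revX :: "(real \<Rightarrow> real) \<Rightarrow> (real \<Rightarrow> real) \<Rightarrow> real \<Rightarrow> real \<Rightarrow> real \<times> real \<times> real" where
  "revX x z s \<theta> = (x s * cos \<theta>, x s * sin \<theta>, z s)"

definition revN :: "(real \<Rightarrow> real) \<Rightarrow> (real \<Rightarrow> real) \<Rightarrow> real \<Rightarrow> real \<Rightarrow> real \<times> real \<times> real" where
  "revN x z s \<theta> = (- deriv z s * cos \<theta>, - deriv z s * sin \<theta>, deriv x s)"

(* Coordinate partial derivatives of a parametrization F(u1,u2); index 1 = s, 2 = \<theta> *)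
definition pd :: "(real \<Rightarrow> real \<Rightarrow> real \<times> real \<times> real) \<Rightarrow> nat \<Rightarrow> real \<Rightarrow> real \<Rightarrow> real \<times> real \<times> real" where
  "pd F i u v = (if i = 1 then vector_derivative (\<lambda>t. F t v) (at u)
                 else vector_derivative (\<lambda>t. F u t) (at v))"

definition fff :: "(real \<Rightarrow> real \<Rightarrow> real \<times> real \<times> real) \<Rightarrow> nat \<Rightarrow> nat \<Rightarrow> real \<Rightarrow> real \<Rightarrow> real" where
  "fff F i j u v = pd F i u v \<bullet> pd F j u v"

definition sff :: "(real \<Rightarrow> real \<Rightarrow> real \<times> real \<times> real) \<Rightarrow> (real \<Rightarrow> real \<Rightarrow> real \<times> real \<times> real)
     \<Rightarrow> nat \<Rightarrow> nat \<Rightarrow> real \<Rightarrow> real \<Rightarrow> real" where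
  "sff F N i j u v = pd (pd F j) i u v \<bullet> N u v"

definition ginv :: "(real \<Rightarrow> real \<Rightarrow> real \<times> real \<times> real) \<Rightarrow> nat \<Rightarrow> nat \<Rightarrow> real \<Rightarrow> real \<Rightarrow> real" where
  "ginv F i j u v =
     (let D = fff F 1 1 u v * fff F 2 2 u v - fff F 1 2 u v * fff F 2 1 u v in
      if i = 1 \<and> j = 1 then fff F 2 2 u v / D
      else if i = 2 \<and> j = 2 then fff F 1 1 u v / D
      else - fff F i j u v / D)"

(* mean curvature H = tr A (unnormalized) *)
definition meancurv :: "(real \<Rightarrow> real \<Rightarrow> real \<times> real \<times> real) \<Rightarrow> (real \<Rightarrow> real \<Rightarrow> real \<times> real \<times> real)
     \<Rightarrow> real \<Rightarrow> real \<Rightarrow> real" where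
  "meancurv F N u v = (\<Sum>i\<in>{1,2}. \<Sum>j\<in>{1,2}. ginv F i j u v * sff F N i j u v)"

definition shapenorm2 :: "(real \<Rightarrow> real \<Rightarrow> real \<times> real \<times> real) \<Rightarrow> (real \<Rightarrow> real \<Rightarrow> real \<times> real \<times> real)
     \<Rightarrow> real \<Rightarrow> real \<Rightarrow> real" where
  "shapenorm2 F N u v = (\<Sum>i\<in>{1,2}. \<Sum>j\<in>{1,2}. \<Sum>k\<in>{1,2}. \<Sum>l\<in>{1,2}.
       ginv F i k u v * ginv F j l u v * sff F N i j u v * sff F N k l u v)"

definition tracelessnorm2 :: "(real \<Rightarrow> real \<Rightarrow> real \<times> real \<times> real) \<Rightarrow> (real \<Rightarrow> real \<Rightarrow> real \<times> real \<times> real)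
     \<Rightarrow> real \<Rightarrow> real \<Rightarrow> real" where
  "tracelessnorm2 F N u v = shapenorm2 F N u v - (meancurv F N u v)^2 / 2"

end

theory Submission imports Defs begin

lemma Dpos: fixes B w :: real assumes "0 < B" "B < 1" shows "0 < 1 + B^2 + 2 * B * sin w"
proof -
  have "B * sin w \<ge> -B" using mult_left_mono[OF sin_ge_minus_one[of w], of B] assms by simp
  moreover have "0 < (1-B)^2" using assms by simp
  ultimately show ?thesis by (simp add: power2_eq_square algebra_simps) 
qed

lemma x_deriv: fixes B H s :: real assumes "0 < B" "B < 1" "H > 0"
  shows "(undx B H has_real_derivative (B * cos (H * s+3*pi/2) / sqrt (1 + B^2 + 2 * B * sin (H * s+3*pi/2)))) (at s)"
proof -
  have p: "0 < 1 + B^2 + 2 * B * sin (H * s+3*pi/2)" using Dpos assms by blast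
  show ?thesis unfolding undx_def[abs_def]
    using p assms by (auto intro!: derivative_eq_intros simp: field_simps)
qed

lemma xd_deriv: fixes B H s :: real assumes "0 < B" "B < 1" "H > 0"
  shows "((\<lambda>s. B * cos (H * s+3*pi/2) / sqrt (1 + B^2 + 2 * B * sin (H * s+3*pi/2))) has_real_derivative
     (B*(-sin (H * s+3*pi/2) * H) * sqrt (1 + B^2 + 2 * B * sin (H * s+3*pi/2)) - B * cos (H * s+3*pi/2) * (2 * B * cos (H * s+3*pi/2)*H / (2 * sqrt (1 + B^2 + 2 * B * sin (H * s+3*pi/2))))) / (1 + B^2 + 2 * B * sin (H * s+3*pi/2))) (at s)"
proof -
  have p: "0 < 1 + B^2 + 2 * B * sin (H * s+3*pi/2)" using Dpos assms by blast
  show ?thesis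
    using p assms by (auto intro!: derivative_eq_intros simp: field_simps)
qed

lemma zd_deriv: fixes B H s :: real assumes "0 < B" "B < 1" "H > 0"
  shows "((\<lambda>s. (1 + B * sin (H * s+3*pi/2)) / sqrt (1 + B^2 + 2 * B * sin (H * s+3*pi/2))) has_real_derivative
     (B * cos (H * s+3*pi/2) * H * sqrt (1 + B^2 + 2 * B * sin (H * s+3*pi/2)) - (1 + B * sin (H * s+3*pi/2)) * (2 * B * cos (H * s+3*pi/2)*H / (2 * sqrt (1 + B^2 + 2 * B * sin (H * s+3*pi/2))))) / (1 + B^2 + 2 * B * sin (H * s+3*pi/2))) (at s)"
proof -
  have p: "0 < 1 + B^2 + 2 * B * sin (H * s+3*pi/2)" using Dpos assms by blast
  show ?thesis
    using p assms by (auto intro!: derivative_eq_intros simp: field_simps)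
qed

lemma f_cont: fixes B H :: real assumes "0 < B" "B < 1"
  shows "continuous_on S (\<lambda>t. (1 + B * sin (H * t)) / sqrt (1 + B^2 + 2 * B * sin (H * t)))"
  apply (auto intro!: continuous_intros) using Dpos[OF assms] by (metis less_irrefl)

lemma z_deriv: fixes B H s :: real assumes "0 < B" "B < 1" "H > 0" "s > 0"
  shows "(undz B H has_real_derivative (1 + B * sin (H * s+3*pi/2)) / sqrt (1 + B^2 + 2 * B * sin (H * s+3*pi/2))) (at s)"
proof -
  define a where "a = 3*pi/(2*H)"
  define f where "f = (\<lambda>t. (1 + B * sin (H * t)) / sqrt (1 + B^2 + 2 * B * sin (H * t)))"
  define G where "G = (\<lambda>y. integral {a..y} f)"
  have a: "a > 0" using assms unfolding a_def by simp
  have cf: "continuous_on S f" for S unfolding f_def using f_cont assms by blast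
  have dG: "(G has_real_derivative f y) (at y)" if "y > a" for y
  proof -
    have "(G has_real_derivative f y) (at y within {a..y+1})"
      unfolding G_def by (rule integral_has_real_derivative) (use cf that in auto)
    moreover have "at y within {a..y+1} = at y"
      by (rule at_within_interior) (use that in auto)
    ultimately show ?thesis by simp
  qed
  have "((\<lambda>s. G (s + a)) has_real_derivative f (s + a) * 1) (at s)"
    by (rule DERIV_chain2[OF dG]) (use assms a in \<open>auto intro!: derivative_eq_intros\<close>)
  then have "((\<lambda>s. G (s + a)) has_real_derivative f (s + a)) (at s)" by simp
  then have "(undz B H has_real_derivative f (s + a)) (at s)"
    apply (rule has_field_derivative_transform_within_open[where S="{0<..}"])
    using assms a by (auto simp: undz_def G_def oint_def a_def f_def)
  moreover have "H * (s + a) = H * s + 3*pi/2" using assms unfolding a_def by (simp add: field_simps)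
  ultimately show ?thesis unfolding f_def by simp
qed

lemma vd3:
  fixes F :: "real \<Rightarrow> real \<times> real \<times> real"
  assumes "(f has_real_derivative f') (at x)" "(g has_real_derivative g') (at x)"
    "(h has_real_derivative h') (at x)" "open S" "x \<in> S" "\<And>y. y \<in> S \<Longrightarrow> F y = (f y, g y, h y)"
  shows "vector_derivative F (at x) = (f', g', h')"
proof -
  have "((\<lambda>y. (f y, g y, h y)) has_vector_derivative (f', g', h')) (at x)"
    using assms(1-3) by (auto intro!: has_vector_derivative_Pair simp: has_real_derivative_iff_has_vector_derivative)
  then have "(F has_vector_derivative (f', g', h')) (at x)"
    by (rule has_vector_derivative_transform_within_open[OF _ assms(4,5)]) (use assms(6) in auto)
  then show ?thesis by (rule vector_derivative_at)
qed

lemma sin_per: "sin (x + real n * (2*pi)) = sin x"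
proof (induction n)
  case (Suc n)
  have "x + real (Suc n) * (2*pi) = (x + real n * (2*pi)) + 2*pi" by (simp add: algebra_simps)
  then show ?case by (simp only: Suc.IH sin_periodic cos_periodic)
qed simp

lemma cos_per: "cos (x + real n * (2*pi)) = cos x"
proof (induction n)
  case (Suc n)
  have "x + real (Suc n) * (2*pi) = (x + real n * (2*pi)) + 2*pi" by (simp add: algebra_simps)
  then show ?case by (simp only: Suc.IH sin_periodic cos_periodic)
qed simp

theorem lemma3p7:
  fixes B H :: real
  assumes "0 < B" "B < 1" "H > 0"
  defines "X \<equiv> revX (undx B H) (undz B H)"
      and "N \<equiv> revN (undx B H) (undz B H)"
      and "t \<equiv> (\<lambda>n::nat. - (1 / H) * arcsin (- B) + (4 * real n - 1) * pi / (2 * H))"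
  shows "\<exists>n0::nat. \<forall>n\<ge>n0.
           tracelessnorm2 X N (t n) 0 * (X (t n) 0 \<bullet> N (t n) 0)^2
             > (1/2) * (2 + H * (X (t n) 0 \<bullet> N (t n) 0))^2"
proof -
  define xf where "xf = undx B H"
  define zf where "zf = undz B H"
  define D where "D = (\<lambda>s. 1 + B^2 + 2 * B * sin (H * s+3*pi/2))"
  define xd where "xd = (\<lambda>s. B * cos (H * s+3*pi/2) / sqrt (1 + B^2 + 2 * B * sin (H * s+3*pi/2)))"
  define zd where "zd = (\<lambda>s. (1 + B * sin (H * s+3*pi/2)) / sqrt (1 + B^2 + 2 * B * sin (H * s+3*pi/2)))"
  define c where "c = sqrt (1 - B^2)"
  have B2: "B^2 < 1" using assms by (simp add: power_less_one_iff abs_less_iff)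
  have c0: "c > 0" unfolding c_def using B2 by simp
  have cc: "c^2 = 1 - B^2" unfolding c_def using B2 by simp
  have xder: "(xf has_real_derivative xd s) (at s)" for s
    unfolding xf_def xd_def using x_deriv assms by blast
  have zder: "(zf has_real_derivative zd s) (at s)" if "s > 0" for s
    unfolding zf_def zd_def using z_deriv assms that by blast
  obtain n0 :: nat where n0: "real n0 > 2 / (1 - B) + 1"
    using reals_Archimedean2 by blast
  show ?thesis
  proof (intro exI allI impI)
    fix n assume nn: "n0 \<le> n"
    define p where "p = t n"
    have nge: "real n > 2 / (1 - B) + 1" using nn n0 by linarith
    have ab: "arcsin B \<ge> 0" using assms arcsin_le_arcsin[of 0 B] by simp
    have Hp: "H * p = arcsin B + 2 * real n * pi - pi/2"
      unfolding p_def t_def using assms arcsin_minus[of B] by (simp add: field_simps)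
    have "2 / (1 - B) > 0" using assms(2) by simp
    then have n1: "real n \<ge> 1" using nge by linarith
    have Hpn: "H * p \<ge> real n"
    proof -
      have "real n * pi \<ge> real n * 3" using pi_gt3 by (intro mult_left_mono) auto
      then have "2 * real n * pi - pi/2 \<ge> real n" using pi_less_4 n1 by linarith
      then show ?thesis using Hp ab by linarith
    qed
    have p0: "p > 0" using Hpn n1 assms(3) zero_less_mult_pos[of H p] by linarith
    have v: "H * p + 3*pi/2 = (arcsin B + pi) + real n * (2*pi)" using Hp by (simp add: algebra_simps)
    have sv: "sin (H * p + 3*pi/2) = -B" unfolding v sin_per using assms by simp
    have cv: "cos (H * p + 3*pi/2) = -c" unfolding v cos_per c_def using assms by (simp add: cos_arcsin)
    have Dv: "1 + B^2 + 2 * B * sin (H * p+3*pi/2) = c^2" unfolding sv cc by (simp add: power2_eq_square)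
    have sDv: "sqrt (1 + B^2 + 2 * B * sin (H * p+3*pi/2)) = c" unfolding Dv using c0 by simp
    have xdp: "xd p = -B" unfolding xd_def sDv cv using c0 by simp
    have zdp: "zd p = c"
    proof -
      have "1 + B * - B = c * c" using cc by (simp add: power2_eq_square)
      have "zd p = (1 + B * sin (H*p+3*pi/2)) / sqrt (1 + B^2 + 2 * B * sin (H*p+3*pi/2))" by (simp add: zd_def)
      also have "\<dots> = (1 + B * - B) / c" by (subst sDv) (simp only: sv)
      finally show ?thesis using \<open>1 + B * - B = c * c\<close> c0 by simp
    qed
    have xfp: "xf p = c / H" unfolding xf_def undx_def sv c_def by (simp add: power2_eq_square)
    have xdd: "(xd has_real_derivative 0) (at p)"
    proof -
      have "(xd has_real_derivative
     (B*(-sin (H * p+3*pi/2) * H) * sqrt (1 + B^2 + 2 * B * sin (H * p+3*pi/2)) - B * cos (H * p+3*pi/2) * (2 * B * cos (H * p+3*pi/2)*H / (2 * sqrt (1 + B^2 + 2 * B * sin (H * p+3*pi/2))))) / (1 + B^2 + 2 * B * sin (H * p+3*pi/2))) (at p)"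
        unfolding xd_def by (rule xd_deriv[OF assms(1-3)])
      moreover have "(B*(-sin (H * p+3*pi/2) * H) * sqrt (1 + B^2 + 2 * B * sin (H * p+3*pi/2)) - B * cos (H * p+3*pi/2) * (2 * B * cos (H * p+3*pi/2)*H / (2 * sqrt (1 + B^2 + 2 * B * sin (H * p+3*pi/2))))) / (1 + B^2 + 2 * B * sin (H * p+3*pi/2)) = 0"
        unfolding sDv unfolding Dv unfolding sv cv using c0 by (simp add: field_simps)
      ultimately show ?thesis by metis
    qed
    have zdd: "(zd has_real_derivative 0) (at p)"
    proof -
      have "(zd has_real_derivative
     (B * cos (H * p+3*pi/2) * H * sqrt (1 + B^2 + 2 * B * sin (H * p+3*pi/2)) - (1 + B * sin (H * p+3*pi/2)) * (2 * B * cos (H * p+3*pi/2)*H / (2 * sqrt (1 + B^2 + 2 * B * sin (H * p+3*pi/2))))) / (1 + B^2 + 2 * B * sin (H * p+3*pi/2))) (at p)"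
        unfolding zd_def by (rule zd_deriv[OF assms(1-3)])
      moreover have "(B * cos (H * p+3*pi/2) * H * sqrt (1 + B^2 + 2 * B * sin (H * p+3*pi/2)) - (1 + B * sin (H * p+3*pi/2)) * (2 * B * cos (H * p+3*pi/2)*H / (2 * sqrt (1 + B^2 + 2 * B * sin (H * p+3*pi/2))))) / (1 + B^2 + 2 * B * sin (H * p+3*pi/2)) = 0"
        unfolding sDv unfolding Dv unfolding sv cv using c0 cc
        apply (simp add: field_simps power2_eq_square)
        by (metis (no_types, opaque_lifting) distrib_left mult.assoc mult.commute mult_1_right)
      ultimately show ?thesis by metis
    qed
    have X_eq: "X s th = (xf s * cos th, xf s * sin th, zf s)" for s th
      unfolding X_def revX_def xf_def zf_def by simp
    have pd1: "pd X 1 s th = (xd s * cos th, xd s * sin th, zd s)" if "s > 0" for s th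
      unfolding pd_def X_eq using that
      by (simp, intro vd3[where S="{0<..}"]) (auto intro!: derivative_eq_intros xder zder)
    have pd2: "pd X 2 s th = (- (xf s * sin th), xf s * cos th, 0)" for s th
      unfolding pd_def X_eq
      by (simp, intro vd3[where S=UNIV]) (auto intro!: derivative_eq_intros)
    have e11: "pd (pd X 1) 1 p 0 = (0, 0, 0)"
      unfolding pd_def[of "pd X 1"] 
      by (simp, intro vd3[where S="{0<..}" and f=xd and g="\<lambda>_. 0" and h=zd]) (auto simp: pd1[unfolded One_nat_def] p0 intro!: xdd zdd)
    have e21: "pd (pd X 2) 1 p 0 = (0, xd p, 0)"
      unfolding pd_def[of "pd X 2"] 
      by (simp, intro vd3[where S=UNIV and f="\<lambda>_. 0" and g=xf and h="\<lambda>_. 0"]) (auto simp: pd2 intro!: xder)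
    have e12: "pd (pd X 1) 2 p 0 = (0, xd p, 0)"
      unfolding pd_def[of "pd X 1"] 
      by (simp, intro vd3[where S=UNIV]) (auto simp: pd1[unfolded One_nat_def] p0 intro!: derivative_eq_intros)
    have e22: "pd (pd X 2) 2 p 0 = (- xf p, 0, 0)"
      unfolding pd_def[of "pd X 2"] 
      by (simp, intro vd3[where S=UNIV]) (auto simp: pd2 intro!: derivative_eq_intros)
    have Np: "N p 0 = (- zd p, 0, xd p)"
      unfolding N_def revN_def using DERIV_imp_deriv[OF xder] DERIV_imp_deriv[OF zder[OF p0]]
      by (simp add: xf_def zf_def)
    have g11: "fff X 1 1 p 0 = 1" unfolding fff_def pd1[OF p0] xdp zdp using cc by (simp add: power2_eq_square)
    have g12: "fff X 1 2 p 0 = 0" unfolding fff_def pd1[OF p0] pd2 by simp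
    have g21: "fff X 2 1 p 0 = 0" unfolding fff_def pd1[OF p0] pd2 by simp
    have g22: "fff X 2 2 p 0 = (c/H)^2" unfolding fff_def pd2 xfp by (simp add: power2_eq_square)
    have b11: "sff X N 1 1 p 0 = 0" unfolding sff_def e11 Np by simp
    have b12: "sff X N 1 2 p 0 = 0" unfolding sff_def e21 Np by simp
    have b21: "sff X N 2 1 p 0 = 0" unfolding sff_def e12 Np by simp
    have b22: "sff X N 2 2 p 0 = c^2 / H" unfolding sff_def e22 Np xfp zdp by (simp add: power2_eq_square)
    have cH: "(c/H)^2 \<noteq> 0" using c0 assms by simp
    have i11: "ginv X 1 1 p 0 = 1" unfolding ginv_def Let_def g11 g12 g21 g22 using cH by simp
    have i22: "ginv X 2 2 p 0 = 1 / (c/H)^2" unfolding ginv_def Let_def g11 g12 g21 g22 by simp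
    have i12: "ginv X 1 2 p 0 = 0" unfolding ginv_def Let_def g11 g12 g21 g22 by simp
    have i21: "ginv X 2 1 p 0 = 0" unfolding ginv_def Let_def g11 g12 g21 g22 by simp
    have mc: "meancurv X N p 0 = H" unfolding meancurv_def
      using c0 assms(3) by (simp add: i11[unfolded One_nat_def] i12[unfolded One_nat_def] i21[unfolded One_nat_def] i22 b11[unfolded One_nat_def] b12[unfolded One_nat_def] b21[unfolded One_nat_def] b22 field_simps power2_eq_square)
    have sn: "shapenorm2 X N p 0 = H^2" unfolding shapenorm2_def
      using c0 assms(3) by (simp add: i11[unfolded One_nat_def] i12[unfolded One_nat_def] i21[unfolded One_nat_def] i22 b11[unfolded One_nat_def] b12[unfolded One_nat_def] b21[unfolded One_nat_def] b22 field_simps power2_eq_square)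
    have tn: "tracelessnorm2 X N p 0 = H^2/2" unfolding tracelessnorm2_def mc sn by simp
    have XN: "X p 0 \<bullet> N p 0 = - (c^2/H) - B * zf p"
      unfolding X_eq Np xfp zdp xdp by (simp add: power2_eq_square)
    define a where "a = 3*pi/(2*H)"
    define f where "f = (\<lambda>t. (1 + B * sin (H * t)) / sqrt (1 + B^2 + 2 * B * sin (H * t)))"
    have a0: "a > 0" unfolding a_def using assms by simp
    have zfp: "zf p = integral {a..p+a} f"
      unfolding zf_def undz_def oint_def a_def f_def using p0 by simp
    have flow: "f s \<ge> (1 - B)/2" for s
    proof -
      have num: "1 + B * sin (H * s) \<ge> 1 - B"
        using mult_left_mono[OF sin_ge_minus_one[of "H * s"], of B] assms by simp
      have "B * sin (H * s) \<le> B" using mult_left_mono[OF sin_le_one[of "H * s"], of B] assms by simp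
      then have "2 * B * sin (H * s) \<le> 2 * B" by simp
      then have D4: "1 + B^2 + 2 * B * sin (H * s) \<le> 2^2" using B2 assms(2) by simp
      have den: "sqrt (1 + B^2 + 2 * B * sin (H * s)) \<le> 2" using real_sqrt_le_mono[OF D4] by simp
      have dp: "sqrt (1 + B^2 + 2 * B * sin (H * s)) > 0" using Dpos[OF assms(1,2)] by simp
      have "(1 - B)/2 \<le> (1 - B) / sqrt (1 + B^2 + 2 * B * sin (H * s))"
        using den dp assms by (intro divide_left_mono) auto
      also have "\<dots> \<le> f s" unfolding f_def using num dp by (intro divide_right_mono) auto
      finally show ?thesis .
    qed
    have "integral {a..p+a} (\<lambda>_. (1 - B)/2) \<le> integral {a..p+a} f"
      by (rule integral_le[OF integrable_continuous_interval[OF continuous_on_const]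
            integrable_continuous_interval[OF f_cont[OF assms(1,2), of _ H, folded f_def]]]) (use flow in auto)
    then have zlow: "zf p \<ge> p * ((1 - B)/2)" unfolding zfp using p0 by simp
    have "H * p * (1 - B) > 2"
    proof -
      have "real n * (1 - B) > 2" using nge assms by (simp add: field_simps)
      moreover have "H * p * (1 - B) \<ge> real n * (1 - B)" using Hpn assms by (intro mult_right_mono) auto
      ultimately show ?thesis by linarith
    qed
    then have "H * zf p > 1"
      using mult_left_mono[OF zlow, of H] assms by (simp add: algebra_simps)
    then have HV: "H * (X p 0 \<bullet> N p 0) < -1"
    proof -
      have "H * (X p 0 \<bullet> N p 0) = -(c^2) - B * (H * zf p)" unfolding XN using assms by (simp add: field_simps)
      moreover have "B * (H * zf p) > B * B" using \<open>H * zf p > 1\<close> assms(1,2)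
        by (intro mult_strict_left_mono) auto
      ultimately show ?thesis unfolding cc by (simp add: power2_eq_square)
    qed
    have "(1/2) * (2 + H * (X p 0 \<bullet> N p 0))^2 = H^2/2 * (X p 0 \<bullet> N p 0)^2 + 2 + 2 * (H * (X p 0 \<bullet> N p 0))"
      by (simp add: power2_eq_square algebra_simps)
    then show "tracelessnorm2 X N (t n) 0 * (X (t n) 0 \<bullet> N (t n) 0)^2
             > (1/2) * (2 + H * (X (t n) 0 \<bullet> N (t n) 0))^2"
      unfolding p_def[symmetric] tn using HV by linarith
  qed
qed

end
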